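(* Let $D$ be a connected locally finite C-homogeneous digraph. Then for every vertex $x\in VD$, neither the subdigraph induced by $N^+(x)$ nor the subdigraph induced by $N^-(x)$ is isomorphic to $H$.
   Context: A digraph has an irreflexive, antisymmetric edge relation; connectedness and local finiteness refer to the underlying undirected graph. $D$ is C-homogeneous if every isomorphism between finite connected induced subdigraphs extends to an automorphism of $D$. $N^+(x)=\{y: xy\in ED\}$, $N^-(x)=\{y: yx\in ED\}$. A digraph is homogeneous if every isomorphism between finite induced subdigraphs extends to an automorphism. By Lachlan's classification, a finite digraph is homogeneous iff it is isomorphic to the directed 4-cycle $C_4$, to $\bar K_n$ (no edges, $n$ vertices), $\bar K_n[C_3]$, $C_3[\bar K_n]$ ($n\ge 1$, lexicographic products with the directed triangle $C_3$), or to one further exceptional digraph; $H$ denotes this exceptional finite homogeneous digraph. *)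

theory Defs
  imports Main
begin

definition digraph :: "'a set \<Rightarrow> ('a \<Rightarrow> 'a \<Rightarrow> bool) \<Rightarrow> bool" where
  "digraph V E \<longleftrightarrow> (\<forall>x y. E x y \<longrightarrow> x \<in> V \<and> y \<in> V) \<and> (\<forall>x. \<not> E x x)
     \<and> (\<forall>x y. E x y \<longrightarrow> \<not> E y x)"

definition connected_on :: "('a \<Rightarrow> 'a \<Rightarrow> bool) \<Rightarrow> 'a set \<Rightarrow> bool" where
  "connected_on E A \<longleftrightarrow>
     (\<forall>x\<in>A. \<forall>y\<in>A. (\<lambda>u v. u \<in> A \<and> v \<in> A \<and> (E u v \<or> E v u))\<^sup>*\<^sup>* x y)"

definition locally_finite :: "'a set \<Rightarrow> ('a \<Rightarrow> 'a \<Rightarrow> bool) \<Rightarrow> bool" where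
  "locally_finite V E \<longleftrightarrow> (\<forall>x\<in>V. finite {y \<in> V. E x y \<or> E y x})"

definition dg_iso :: "'a set \<Rightarrow> ('a \<Rightarrow> 'a \<Rightarrow> bool) \<Rightarrow> 'b set \<Rightarrow> ('b \<Rightarrow> 'b \<Rightarrow> bool)
    \<Rightarrow> ('a \<Rightarrow> 'b) \<Rightarrow> bool" where
  "dg_iso V1 E1 V2 E2 f \<longleftrightarrow> bij_betw f V1 V2 \<and>
     (\<forall>x\<in>V1. \<forall>y\<in>V1. E1 x y \<longleftrightarrow> E2 (f x) (f y))"

definition dg_isomorphic :: "'a set \<Rightarrow> ('a \<Rightarrow> 'a \<Rightarrow> bool) \<Rightarrow> 'b set \<Rightarrow> ('b \<Rightarrow> 'b \<Rightarrow> bool)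
    \<Rightarrow> bool" where
  "dg_isomorphic V1 E1 V2 E2 \<longleftrightarrow> (\<exists>f. dg_iso V1 E1 V2 E2 f)"

definition automorphism :: "'a set \<Rightarrow> ('a \<Rightarrow> 'a \<Rightarrow> bool) \<Rightarrow> ('a \<Rightarrow> 'a) \<Rightarrow> bool" where
  "automorphism V E g \<longleftrightarrow> dg_iso V E V E g"

definition C_homogeneous :: "'a set \<Rightarrow> ('a \<Rightarrow> 'a \<Rightarrow> bool) \<Rightarrow> bool" where
  "C_homogeneous V E \<longleftrightarrow>
     (\<forall>A B f. A \<subseteq> V \<and> B \<subseteq> V \<and> finite A \<and> finite B \<and> connected_on E A \<and> connected_on E B
        \<and> dg_iso A E B E f \<longrightarrow> (\<exists>g. automorphism V E g \<and> (\<forall>x\<in>A. g x = f x)))"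

definition out_nbhd :: "'a set \<Rightarrow> ('a \<Rightarrow> 'a \<Rightarrow> bool) \<Rightarrow> 'a \<Rightarrow> 'a set" where
  "out_nbhd V E x = {y \<in> V. E x y}"

definition in_nbhd :: "'a set \<Rightarrow> ('a \<Rightarrow> 'a \<Rightarrow> bool) \<Rightarrow> 'a \<Rightarrow> 'a set" where
  "in_nbhd V E x = {y \<in> V. E y x}"

text \<open>The exceptional finite homogeneous digraph H of Lachlan's classification
  (Cherlin's H_0): the Cayley digraph of the quaternion group Q8 = {+-1,+-i,+-j,+-k}
  with connection set {i,j,k}. A unit (s,a) encodes (-1)^s * e_a with
  e_0 = 1, e_1 = i, e_2 = j, e_3 = k.\<close>

fun qbasis_mul :: "nat \<Rightarrow> nat \<Rightarrow> bool \<times> nat" where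
  "qbasis_mul a b =
    (if a = 0 then (False, b) else if b = 0 then (False, a) else if a = b then (True, 0)
     else if (a, b) = (1, 2) then (False, 3) else if (a, b) = (2, 3) then (False, 1)
     else if (a, b) = (3, 1) then (False, 2) else if (a, b) = (2, 1) then (True, 3)
     else if (a, b) = (3, 2) then (True, 1) else (True, 2))"

fun qmul :: "bool \<times> nat \<Rightarrow> bool \<times> nat \<Rightarrow> bool \<times> nat" where
  "qmul (s, a) (t, b) = (case qbasis_mul a b of (r, c) \<Rightarrow> ((s \<noteq> t) \<noteq> r, c))"

fun qinv :: "bool \<times> nat \<Rightarrow> bool \<times> nat" where
  "qinv (s, a) = (if a = 0 then (s, 0) else (\<not> s, a))"

definition H_vert :: "(bool \<times> nat) set" where
  "H_vert = {(s, a). a < 4}"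

definition H_edge :: "bool \<times> nat \<Rightarrow> bool \<times> nat \<Rightarrow> bool" where
  "H_edge x y \<longleftrightarrow> x \<in> H_vert \<and> y \<in> H_vert \<and> qmul (qinv x) y \<in> {(False, 1), (False, 2), (False, 3)}"

end

theory Submission
  imports Defs
begin


definition hl :: "(bool\<times>nat) list" where
 "hl = [(False,0),(False,1),(False,2),(False,3),(True,0),(True,1),(True,2),(True,3)]"

definition harcs :: "((bool\<times>nat)\<times>(bool\<times>nat)) list" where
 "harcs = [((False,0),(False,1)),((False,0),(False,2)),((False,0),(False,3)),
  ((False,1),(False,3)),((False,1),(True,0)),((False,1),(True,2)),
  ((False,2),(False,1)),((False,2),(True,0)),((False,2),(True,3)),
  ((False,3),(False,2)),((False,3),(True,0)),((False,3),(True,1)),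
  ((True,0),(True,1)),((True,0),(True,2)),((True,0),(True,3)),
  ((True,1),(False,0)),((True,1),(False,2)),((True,1),(True,3)),
  ((True,2),(False,0)),((True,2),(False,3)),((True,2),(True,1)),
  ((True,3),(False,0)),((True,3),(False,1)),((True,3),(True,2))]"

definition he :: "bool\<times>nat \<Rightarrow> bool\<times>nat \<Rightarrow> bool" where
  "he a b \<longleftrightarrow> (a,b) \<in> set harcs"

lemma Hv_eq: "H_vert = set hl"
  unfolding H_vert_def hl_def by (auto simp: less_Suc_eq numeral_eq_Suc)

lemma qm: "\<forall>a\<in>set hl. \<forall>b\<in>set hl. (qmul (qinv a) b \<in> {(False, 1), (False, 2), (False, 3)}) = he a b"
  unfolding hl_def he_def harcs_def by code_simp

lemma harcs_sub: "\<forall>p\<in>set harcs. fst p \<in> set hl \<and> snd p \<in> set hl"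
  unfolding hl_def harcs_def by code_simp

lemma He_eq: "H_edge = he"
proof (intro ext)
  fix a b show "H_edge a b = he a b"
  proof (cases "a \<in> set hl \<and> b \<in> set hl")
    case True thus ?thesis using qm by (auto simp: H_edge_def Hv_eq)
  next
    case False thus ?thesis using harcs_sub by (auto simp: H_edge_def Hv_eq he_def)
  qed
qed


lemma HP0: "(\<forall>b\<in>H_vert. card {y\<in>H_vert. H_edge y b} = 3)"
  unfolding Hv_eq He_eq hl_def he_def harcs_def by code_simp

lemma HP1: "(\<forall>b\<in>H_vert. card {y\<in>H_vert. H_edge b y} = 3)"
  unfolding Hv_eq He_eq hl_def he_def harcs_def by code_simp

lemma HP2: "(\<forall>v\<in>H_vert. \<forall>w\<in>H_vert. (\<forall>c\<in>H_vert. H_edge v c \<longrightarrow> H_edge w c) \<longrightarrow> w = v)"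
  unfolding Hv_eq He_eq hl_def he_def harcs_def by code_simp

lemma HP3: "(\<forall>v\<in>H_vert. \<exists>a\<in>H_vert. \<exists>b\<in>H_vert. \<exists>c\<in>H_vert. H_edge a b \<and> H_edge b c \<and> H_edge c a \<and> (\<forall>d\<in>H_vert. H_edge v d \<longleftrightarrow> (d=a \<or> d=b \<or> d=c)))"
  unfolding Hv_eq He_eq hl_def he_def harcs_def by code_simp

lemma HP4: "(\<forall>a\<in>H_vert. \<forall>b\<in>H_vert. \<forall>c\<in>H_vert. H_edge a b \<and> H_edge b c \<and> H_edge c a \<longrightarrow> (\<exists>w\<in>H_vert. \<forall>d\<in>H_vert. H_edge w d \<longleftrightarrow> (d=a \<or> d=b \<or> d=c)))"
  unfolding Hv_eq He_eq hl_def he_def harcs_def by code_simp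

lemma HP5: "(\<forall>a\<in>H_vert. card {z\<in>H_vert. z \<noteq> a \<and> \<not> H_edge a z \<and> \<not> H_edge z a} = 1)"
  unfolding Hv_eq He_eq hl_def he_def harcs_def by code_simp

lemma HP6: "(\<forall>a\<in>H_vert. \<forall>z\<in>H_vert. \<forall>c\<in>H_vert. z \<noteq> a \<and> \<not> H_edge a z \<and> \<not> H_edge z a \<and> H_edge a c \<longrightarrow> H_edge c z)"
  unfolding Hv_eq He_eq hl_def he_def harcs_def by code_simp

lemma HP7: "(\<forall>t\<in>H_vert. \<forall>u\<in>H_vert. u \<noteq> t \<and> \<not> H_edge t u \<longrightarrow> ((\<exists>c\<in>H_vert. H_edge t c \<and> H_edge u c) \<longrightarrow> card {c\<in>H_vert. H_edge t c \<and> H_edge c u} \<le> 1) \<and> ((\<not> (\<exists>c\<in>H_vert. H_edge t c \<and> H_edge u c)) \<longrightarrow> (\<forall>c\<in>H_vert. H_edge t c \<longrightarrow> H_edge c u)))"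
  unfolding Hv_eq He_eq hl_def he_def harcs_def by code_simp



lemma Hcard: "card H_vert = 8"
  unfolding Hv_eq hl_def by code_simp

definition hpsi :: "bool\<times>nat \<Rightarrow> bool\<times>nat" where
  "hpsi p = (fst p \<noteq> (snd p \<noteq> 0), if snd p = 2 then 3 else if snd p = 3 then 2 else snd p)"

definition hrho :: "bool\<times>nat \<Rightarrow> bool\<times>nat" where
  "hrho p = (fst p, if snd p = 0 then 0 else snd p mod 3 + 1)"

definition hLj :: "bool\<times>nat \<Rightarrow> bool\<times>nat" where
  "hLj p = qmul (False,2) p"

definition hLjinv :: "bool\<times>nat \<Rightarrow> bool\<times>nat" where
  "hLjinv p = qmul (True,2) p"

lemma auto_check: "\<forall>a\<in>set hl. hpsi a \<in> set hl \<and> hpsi (hpsi a) = a \<and> hrho a \<in> set hl \<and> hrho (hrho (hrho a)) = a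
   \<and> hLj a \<in> set hl \<and> hLjinv a \<in> set hl \<and> hLj (hLjinv a) = a \<and> hLjinv (hLj a) = a"
  unfolding hl_def hpsi_def hrho_def hLj_def hLjinv_def by code_simp



lemma iso_psi: "dg_iso H_vert (\<lambda>a b. H_edge b a) H_vert H_edge hpsi"
  unfolding dg_iso_def
proof
  show "bij_betw hpsi H_vert H_vert"
    by (rule bij_betw_byWitness[where f'=hpsi]) (use auto_check in \<open>auto simp: Hv_eq\<close>)
  show "\<forall>x\<in>H_vert. \<forall>y\<in>H_vert. H_edge y x = H_edge (hpsi x) (hpsi y)"
    unfolding Hv_eq He_eq hl_def he_def harcs_def hpsi_def by code_simp
qed

lemma iso_rho: "dg_iso H_vert H_edge H_vert H_edge hrho"
  unfolding dg_iso_def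
proof
  show "bij_betw hrho H_vert H_vert"
    by (rule bij_betw_byWitness[where f'="hrho \<circ> hrho"]) (use auto_check in \<open>auto simp: Hv_eq\<close>)
  show "\<forall>x\<in>H_vert. \<forall>y\<in>H_vert. H_edge x y = H_edge (hrho x) (hrho y)"
    unfolding Hv_eq He_eq hl_def he_def harcs_def hrho_def by code_simp
qed

lemma iso_Lj: "dg_iso H_vert H_edge H_vert H_edge hLj"
  unfolding dg_iso_def
proof
  show "bij_betw hLj H_vert H_vert"
    by (rule bij_betw_byWitness[where f'="hLjinv"]) (use auto_check in \<open>auto simp: Hv_eq\<close>)
  show "\<forall>x\<in>H_vert. \<forall>y\<in>H_vert. H_edge x y = H_edge (hLj x) (hLj y)"
    unfolding Hv_eq He_eq hl_def he_def harcs_def hLj_def by code_simp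
qed

lemma hefacts: "H_edge (False,0) (False,1)" "H_edge (False,0) (False,2)" "H_edge (False,0) (False,3)"
  "H_edge (False,1) (False,3)" "H_edge (False,1) (True,0)" "H_edge (False,1) (True,2)" "H_edge (True,0) (True,2)"
  "H_edge (True,1) (False,0)" "H_edge (True,2) (False,0)" "H_edge (True,3) (False,0)"
  by (simp_all add: He_eq he_def harcs_def)

lemma nex10: "\<not> (\<exists>c\<in>H_vert. H_edge (False,0) c \<and> H_edge (True,0) c)"
  unfolding Hv_eq hl_def He_eq he_def harcs_def by code_simp

lemma Rcontra:
  fixes R :: "bool\<times>nat \<Rightarrow> bool\<times>nat \<Rightarrow> bool"
  assumes R1: "\<forall>b\<in>H_vert. R b b"
  and R2: "\<forall>a\<in>H_vert. \<forall>b\<in>H_vert. H_edge b a \<longrightarrow> \<not> R a b"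
  and R3: "\<forall>a\<in>H_vert. \<forall>b\<in>H_vert. a \<noteq> b \<and> R a b \<longrightarrow>
     ((\<exists>c\<in>H_vert. H_edge a c \<and> H_edge b c) \<longrightarrow> (\<forall>c1\<in>H_vert. \<forall>c2\<in>H_vert. H_edge a c1 \<and> H_edge a c2 \<and> R c1 b \<and> R c2 b \<longrightarrow> c1 = c2))
   \<and> ((\<not> (\<exists>c\<in>H_vert. H_edge a c \<and> H_edge b c)) \<longrightarrow> (\<forall>c\<in>H_vert. H_edge a c \<longrightarrow> R c b))"
  and Irho: "\<forall>a\<in>H_vert. \<forall>b\<in>H_vert. R (hrho a) (hrho b) = R a b"
  and ILj: "\<forall>a\<in>H_vert. \<forall>b\<in>H_vert. R (hLj a) (hLj b) = R a b"
  and ex: "\<exists>b\<in>H_vert. b \<noteq> (False,0) \<and> R (False,0) b"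
  shows False
proof -
  have V: "(False,0) \<in> H_vert" "(False,1) \<in> H_vert" "(False,2) \<in> H_vert" "(False,3) \<in> H_vert"
     "(True,0) \<in> H_vert" "(True,1) \<in> H_vert" "(True,2) \<in> H_vert" "(True,3) \<in> H_vert"
    by (simp_all add: H_vert_def)
  have rh: "hrho (False,0) = (False,0)" "hrho (False,1) = (False,2)" "hrho (False,2) = (False,3)"
    "hrho (False,3) = (False,1)" by (simp_all add: hrho_def)
  have lj: "hLj (False,0) = (False,2)" "hLj (False,3) = (False,1)" by (simp_all add: hLj_def)
  have case_i: False if Ri: "R (False,0) (False,1)"
  proof -
    have "R (False,0) (False,2)" using Irho[rule_format, OF V(1) V(2)] Ri unfolding rh by simp
    hence Rk: "R (False,0) (False,3)" using Irho[rule_format, OF V(1) V(3)] unfolding rh by simp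
    have Rji: "R (False,2) (False,1)" using ILj[rule_format, OF V(1) V(4)] Rk unfolding lj by simp
    have ex3: "\<exists>c\<in>H_vert. H_edge (False,0) c \<and> H_edge (False,1) c"
      using V(4) hefacts by blast
    have A: "(False,0::nat) \<noteq> (False,1) \<and> R (False,0) (False,1)" using Ri by simp
    note B = R3[rule_format, OF V(1) V(2) A, THEN conjunct1, rule_format, OF ex3]
    have "(False,1::nat) = (False,2)"
      by (rule B[rule_format, OF V(2) V(3)]) (use hefacts R1 V Rji in blast)
    thus False by simp
  qed
  from ex obtain b where b: "b \<in> H_vert" "b \<noteq> (False,0)" "R (False,0) b" by blast
  from b(1) have "b \<in> set hl" by (simp add: Hv_eq)
  hence "b = (False,1) \<or> b = (False,2) \<or> b = (False,3) \<or> b = (True,0) \<or> b = (True,1) \<or> b = (True,2) \<or> b = (True,3)"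
    using b(2) by (simp add: hl_def)
  thus False
  proof (elim disjE)
    assume "b = (False,1)" thus False using b case_i by simp
  next
    assume "b = (False,2)"
    hence "R (False,0) (False,3)" using Irho[rule_format, OF V(1) V(3)] b unfolding rh by simp
    hence "R (False,0) (False,1)" using Irho[rule_format, OF V(1) V(4)] unfolding rh by simp
    thus False by (rule case_i)
  next
    assume "b = (False,3)"
    hence "R (False,0) (False,1)" using Irho[rule_format, OF V(1) V(4)] b unfolding rh by simp
    thus False by (rule case_i)
  next
    assume bm: "b = (True,0)"
    have A: "(False,0::nat) \<noteq> (True,0) \<and> R (False,0) (True,0)" using b bm by simp
    note all = R3[rule_format, OF V(1) V(5) A, THEN conjunct2, rule_format, OF nex10]
    have Ri: "R (False,1) (True,0)" by (rule all) (use V hefacts in auto)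
    have Rk: "R (False,3) (True,0)" by (rule all) (use V hefacts in auto)
    have ex3: "\<exists>c\<in>H_vert. H_edge (False,1) c \<and> H_edge (True,0) c"
      using V(7) hefacts by blast
    have A2: "(False,1::nat) \<noteq> (True,0) \<and> R (False,1) (True,0)" using Ri by simp
    note B = R3[rule_format, OF V(2) V(5) A2, THEN conjunct1, rule_format, OF ex3]
    have "(True,0::nat) = (False,3)"
      by (rule B[rule_format, OF V(5) V(4)]) (use hefacts R1 V Rk in blast)
    thus False by simp
  next
    assume "b = (True,1)" thus False using b R2 V hefacts by blast
  next
    assume "b = (True,2)" thus False using b R2 V hefacts by blast
  next
    assume "b = (True,3)" thus False using b R2 V hefacts by blast
  qed
qed



definition Hl :: "'a set \<Rightarrow> ('a \<Rightarrow> 'a \<Rightarrow> bool) \<Rightarrow> bool" where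
 "Hl N E \<longleftrightarrow> (\<forall>b\<in>N. card {y\<in>N. E y b} = 3) \<and>
  (\<forall>b\<in>N. card {y\<in>N. E b y} = 3) \<and>
  (\<forall>v\<in>N. \<forall>w\<in>N. (\<forall>c\<in>N. E v c \<longrightarrow> E w c) \<longrightarrow> w = v) \<and>
  (\<forall>v\<in>N. \<exists>a\<in>N. \<exists>b\<in>N. \<exists>c\<in>N. E a b \<and> E b c \<and> E c a \<and> (\<forall>d\<in>N. E v d \<longleftrightarrow> (d=a \<or> d=b \<or> d=c))) \<and>
  (\<forall>a\<in>N. \<forall>b\<in>N. \<forall>c\<in>N. E a b \<and> E b c \<and> E c a \<longrightarrow> (\<exists>w\<in>N. \<forall>d\<in>N. E w d \<longleftrightarrow> (d=a \<or> d=b \<or> d=c))) \<and>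
  (\<forall>a\<in>N. card {z\<in>N. z \<noteq> a \<and> \<not> E a z \<and> \<not> E z a} = 1) \<and>
  (\<forall>a\<in>N. \<forall>z\<in>N. \<forall>c\<in>N. z \<noteq> a \<and> \<not> E a z \<and> \<not> E z a \<and> E a c \<longrightarrow> E c z) \<and>
  (\<forall>t\<in>N. \<forall>u\<in>N. u \<noteq> t \<and> \<not> E t u \<longrightarrow> ((\<exists>c\<in>N. E t c \<and> E u c) \<longrightarrow> card {c\<in>N. E t c \<and> E c u} \<le> 1) \<and> ((\<not> (\<exists>c\<in>N. E t c \<and> E u c)) \<longrightarrow> (\<forall>c\<in>N. E t c \<longrightarrow> E c u)))"

lemma HHl: "Hl H_vert H_edge"
  unfolding Hl_def by (intro conjI HP0 HP1 HP2 HP3 HP4 HP5 HP6 HP7)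

lemma iso_Hl:
  assumes iso: "dg_iso N E (H_vert::(bool\<times>nat) set) F \<phi>" and HF: "Hl H_vert F"
  shows "Hl N E"
proof -
  let ?W = "inv_into N \<phi>"
  have bij: "bij_betw \<phi> N H_vert" and EF: "\<And>x y. x\<in>N \<Longrightarrow> y\<in>N \<Longrightarrow> E x y = F (\<phi> x) (\<phi> y)"
    using iso unfolding dg_iso_def by auto
  have Win: "\<And>h. h \<in> H_vert \<Longrightarrow> ?W h \<in> N" using bij
    by (metis bij_betw_def inv_into_into)
  have phiW: "\<And>h. h \<in> H_vert \<Longrightarrow> \<phi> (?W h) = h" using bij
    by (meson bij_betw_inv_into_right)
  have Wphi: "\<And>y. y \<in> N \<Longrightarrow> ?W (\<phi> y) = y" using bij
    by (meson bij_betw_inv_into_left)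
  have phiin: "\<And>y. y \<in> N \<Longrightarrow> \<phi> y \<in> H_vert" using bij by (simp add: bij_betw_apply)
  have ball: "\<And>P. (\<forall>y\<in>N. P y) = (\<forall>h\<in>H_vert. P (?W h))"
  proof
    fix P assume "\<forall>y\<in>N. P y" thus "\<forall>h\<in>H_vert. P (?W h)" using Win by blast
  next
    fix P assume a: "\<forall>h\<in>H_vert. P (?W h)"
    show "\<forall>y\<in>N. P y"
    proof
      fix y assume "y \<in> N" thus "P y" using a[rule_format, OF phiin] Wphi by simp
    qed
  qed
  have bex: "\<And>P. (\<exists>y\<in>N. P y) = (\<exists>h\<in>H_vert. P (?W h))"
  proof
    fix P assume "\<exists>y\<in>N. P y"
    then obtain y where "y \<in> N" "P y" by blast
    thus "\<exists>h\<in>H_vert. P (?W h)" using phiin Wphi by force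
  next
    fix P assume "\<exists>h\<in>H_vert. P (?W h)" thus "\<exists>y\<in>N. P y" using Win by blast
  qed
  have EW: "\<And>a b. a \<in> H_vert \<Longrightarrow> b \<in> H_vert \<Longrightarrow> E (?W a) (?W b) = F a b"
    using EF Win phiW by simp
  have eqW: "\<And>a b. a \<in> H_vert \<Longrightarrow> b \<in> H_vert \<Longrightarrow> (?W a = ?W b) = (a = b)"
    by (metis phiW)
  have injW: "inj_on ?W H_vert" using eqW by (auto simp: inj_on_def)
  have cardc: "\<And>P. card {y\<in>N. P y} = card {h\<in>H_vert. P (?W h)}"
  proof -
    fix P
    have "{y\<in>N. P y} = ?W ` {h\<in>H_vert. P (?W h)}"
    proof
      show "{y\<in>N. P y} \<subseteq> ?W ` {h\<in>H_vert. P (?W h)}"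
      proof
        fix y assume "y \<in> {y\<in>N. P y}"
        hence "y \<in> N" "P y" by auto
        thus "y \<in> ?W ` {h\<in>H_vert. P (?W h)}" using phiin Wphi by (metis (mono_tags, lifting) image_eqI mem_Collect_eq)
      qed
    qed (use Win in auto)
    moreover have "inj_on ?W {h\<in>H_vert. P (?W h)}" using injW by (rule inj_on_subset) auto
    ultimately show "card {y\<in>N. P y} = card {h\<in>H_vert. P (?W h)}" by (simp add: card_image)
  qed
  have cardc2: "\<And>(P::'a \<Rightarrow> bool) Q. (\<And>h. h \<in> H_vert \<Longrightarrow> P (?W h) = Q h) \<Longrightarrow> card {y\<in>N. P y} = card {h\<in>H_vert. Q h}"
  proof -
    fix P :: "'a \<Rightarrow> bool" and Q assume a: "\<And>h. h \<in> H_vert \<Longrightarrow> P (?W h) = Q h"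
    have "{h\<in>H_vert. P (?W h)} = {h\<in>H_vert. Q h}" using a by auto
    thus "card {y\<in>N. P y} = card {h\<in>H_vert. Q h}" by (simp add: cardc)
  qed
  have c0: "\<And>b. b \<in> H_vert \<Longrightarrow> card {y\<in>N. E y (?W b)} = card {h\<in>H_vert. F h b}"
    by (rule cardc2) (simp add: EW eqW)
  have c1: "\<And>b. b \<in> H_vert \<Longrightarrow> card {y\<in>N. E (?W b) y} = card {h\<in>H_vert. F b h}"
    by (rule cardc2) (simp add: EW eqW)
  have c5: "\<And>b. b \<in> H_vert \<Longrightarrow> card {y\<in>N. y \<noteq> ?W b \<and> \<not> E (?W b) y \<and> \<not> E y (?W b)} = card {h\<in>H_vert. h \<noteq> b \<and> \<not> F b h \<and> \<not> F h b}"
    by (rule cardc2) (simp add: EW eqW)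
  have c7: "\<And>t u. t \<in> H_vert \<Longrightarrow> u \<in> H_vert \<Longrightarrow> card {y\<in>N. E (?W t) y \<and> E y (?W u)} = card {h\<in>H_vert. F t h \<and> F h u}"
    by (rule cardc2) (simp add: EW eqW)
  have G0: "(\<forall>b\<in>H_vert. card {y\<in>H_vert. F y b} = 3)"
    by (rule HF[unfolded Hl_def, THEN conjunct1])
  have R0: "(\<forall>b\<in>N. card {y\<in>N. E y b} = 3)"
    unfolding ball bex using G0 by (simp add: EW eqW c0 c1 c5 c7)
  have G1: "(\<forall>b\<in>H_vert. card {y\<in>H_vert. F b y} = 3)"
    by (rule HF[unfolded Hl_def, THEN conjunct2, THEN conjunct1])
  have R1: "(\<forall>b\<in>N. card {y\<in>N. E b y} = 3)"
    unfolding ball bex using G1 by (simp add: EW eqW c0 c1 c5 c7)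
  have G2: "(\<forall>v\<in>H_vert. \<forall>w\<in>H_vert. (\<forall>c\<in>H_vert. F v c \<longrightarrow> F w c) \<longrightarrow> w = v)"
    by (rule HF[unfolded Hl_def, THEN conjunct2, THEN conjunct2, THEN conjunct1])
  have R2: "(\<forall>v\<in>N. \<forall>w\<in>N. (\<forall>c\<in>N. E v c \<longrightarrow> E w c) \<longrightarrow> w = v)"
    unfolding ball bex using G2 by (simp add: EW eqW)
  have G3: "(\<forall>v\<in>H_vert. \<exists>a\<in>H_vert. \<exists>b\<in>H_vert. \<exists>c\<in>H_vert. F a b \<and> F b c \<and> F c a \<and> (\<forall>d\<in>H_vert. F v d \<longleftrightarrow> (d=a \<or> d=b \<or> d=c)))"
    by (rule HF[unfolded Hl_def, THEN conjunct2, THEN conjunct2, THEN conjunct2, THEN conjunct1])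
  have R3: "(\<forall>v\<in>N. \<exists>a\<in>N. \<exists>b\<in>N. \<exists>c\<in>N. E a b \<and> E b c \<and> E c a \<and> (\<forall>d\<in>N. E v d \<longleftrightarrow> (d=a \<or> d=b \<or> d=c)))"
    unfolding ball bex using G3 by (simp add: EW eqW c0 c1 c5 c7)
  have G4: "(\<forall>a\<in>H_vert. \<forall>b\<in>H_vert. \<forall>c\<in>H_vert. F a b \<and> F b c \<and> F c a \<longrightarrow> (\<exists>w\<in>H_vert. \<forall>d\<in>H_vert. F w d \<longleftrightarrow> (d=a \<or> d=b \<or> d=c)))"
    by (rule HF[unfolded Hl_def, THEN conjunct2, THEN conjunct2, THEN conjunct2, THEN conjunct2, THEN conjunct1])
  have R4: "(\<forall>a\<in>N. \<forall>b\<in>N. \<forall>c\<in>N. E a b \<and> E b c \<and> E c a \<longrightarrow> (\<exists>w\<in>N. \<forall>d\<in>N. E w d \<longleftrightarrow> (d=a \<or> d=b \<or> d=c)))"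
    unfolding ball bex using G4 by (simp add: EW eqW c0 c1 c5 c7)
  have G5: "(\<forall>a\<in>H_vert. card {z\<in>H_vert. z \<noteq> a \<and> \<not> F a z \<and> \<not> F z a} = 1)"
    by (rule HF[unfolded Hl_def, THEN conjunct2, THEN conjunct2, THEN conjunct2, THEN conjunct2, THEN conjunct2, THEN conjunct1])
  have R5: "(\<forall>a\<in>N. card {z\<in>N. z \<noteq> a \<and> \<not> E a z \<and> \<not> E z a} = 1)"
    unfolding ball bex using G5 by (simp add: EW eqW c0 c1 c5 c7)
  have G6: "(\<forall>a\<in>H_vert. \<forall>z\<in>H_vert. \<forall>c\<in>H_vert. z \<noteq> a \<and> \<not> F a z \<and> \<not> F z a \<and> F a c \<longrightarrow> F c z)"
    by (rule HF[unfolded Hl_def, THEN conjunct2, THEN conjunct2, THEN conjunct2, THEN conjunct2, THEN conjunct2, THEN conjunct2, THEN conjunct1])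
  have phieq: "\<And>x y. x \<in> N \<Longrightarrow> y \<in> N \<Longrightarrow> (\<phi> x = \<phi> y) = (x = y)"
    using bij by (metis bij_betw_inv_into_left)
  have EFW1: "\<And>t h. t \<in> N \<Longrightarrow> h \<in> H_vert \<Longrightarrow> E t (?W h) = F (\<phi> t) h"
    using EF Win phiW by simp
  have EFW2: "\<And>t h. t \<in> N \<Longrightarrow> h \<in> H_vert \<Longrightarrow> E (?W h) t = F h (\<phi> t)"
    using EF Win phiW by simp
  have R6: "(\<forall>a\<in>N. \<forall>z\<in>N. \<forall>c\<in>N. z \<noteq> a \<and> \<not> E a z \<and> \<not> E z a \<and> E a c \<longrightarrow> E c z)"
  proof (intro ballI impI)
    fix a z c assume m: "a\<in>N" "z\<in>N" "c\<in>N" and p: "z \<noteq> a \<and> \<not> E a z \<and> \<not> E z a \<and> E a c"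
    have "\<phi> z \<noteq> \<phi> a \<and> \<not> F (\<phi> a) (\<phi> z) \<and> \<not> F (\<phi> z) (\<phi> a) \<and> F (\<phi> a) (\<phi> c)"
      using p m EF phieq by metis
    hence "F (\<phi> c) (\<phi> z)" using G6 phiin m by blast
    thus "E c z" using EF m by simp
  qed
  have G7: "(\<forall>t\<in>H_vert. \<forall>u\<in>H_vert. u \<noteq> t \<and> \<not> F t u \<longrightarrow> ((\<exists>c\<in>H_vert. F t c \<and> F u c) \<longrightarrow> card {c\<in>H_vert. F t c \<and> F c u} \<le> 1) \<and> ((\<not> (\<exists>c\<in>H_vert. F t c \<and> F u c)) \<longrightarrow> (\<forall>c\<in>H_vert. F t c \<longrightarrow> F c u)))"
    by (rule HF[unfolded Hl_def, THEN conjunct2, THEN conjunct2, THEN conjunct2, THEN conjunct2, THEN conjunct2, THEN conjunct2, THEN conjunct2])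
  have R7: "(\<forall>t\<in>N. \<forall>u\<in>N. u \<noteq> t \<and> \<not> E t u \<longrightarrow> ((\<exists>c\<in>N. E t c \<and> E u c) \<longrightarrow> card {c\<in>N. E t c \<and> E c u} \<le> 1) \<and> ((\<not> (\<exists>c\<in>N. E t c \<and> E u c)) \<longrightarrow> (\<forall>c\<in>N. E t c \<longrightarrow> E c u)))"
  proof (intro ballI impI)
    fix t u assume m: "t\<in>N" "u\<in>N" and p: "u \<noteq> t \<and> \<not> E t u"
    have p': "\<phi> u \<noteq> \<phi> t \<and> \<not> F (\<phi> t) (\<phi> u)" using p m EF phieq by metis
    have ex: "(\<exists>c\<in>N. E t c \<and> E u c) = (\<exists>h\<in>H_vert. F (\<phi> t) h \<and> F (\<phi> u) h)"
      unfolding bex using m by (simp add: EFW1)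
    have al: "(\<forall>c\<in>N. E t c \<longrightarrow> E c u) = (\<forall>h\<in>H_vert. F (\<phi> t) h \<longrightarrow> F h (\<phi> u))"
      unfolding ball using m by (simp add: EFW1 EFW2)
    have cd: "card {c\<in>N. E t c \<and> E c u} = card {h\<in>H_vert. F (\<phi> t) h \<and> F h (\<phi> u)}"
      by (rule cardc2) (use m in \<open>simp add: EFW1 EFW2\<close>)
    have g: "((\<exists>h\<in>H_vert. F (\<phi> t) h \<and> F (\<phi> u) h) \<longrightarrow> card {h\<in>H_vert. F (\<phi> t) h \<and> F h (\<phi> u)} \<le> 1) \<and>
      ((\<not> (\<exists>h\<in>H_vert. F (\<phi> t) h \<and> F (\<phi> u) h)) \<longrightarrow> (\<forall>h\<in>H_vert. F (\<phi> t) h \<longrightarrow> F h (\<phi> u)))"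
      using G7 phiin m p' by blast
    show "((\<exists>c\<in>N. E t c \<and> E u c) \<longrightarrow> card {c\<in>N. E t c \<and> E c u} \<le> 1) \<and> ((\<not> (\<exists>c\<in>N. E t c \<and> E u c)) \<longrightarrow> (\<forall>c\<in>N. E t c \<longrightarrow> E c u))"
      unfolding ex al cd by (rule g)
  qed
  show ?thesis unfolding Hl_def by (intro conjI R0 R1 R2 R3 R4 R5 R6 R7)
qed


lemma Hl_G0: assumes "Hl N E" shows "(\<forall>b\<in>N. card {y\<in>N. E y b} = 3)"
  by (rule assms[unfolded Hl_def, THEN conjunct1])
lemma Hl_G1: assumes "Hl N E" shows "(\<forall>b\<in>N. card {y\<in>N. E b y} = 3)"
  by (rule assms[unfolded Hl_def, THEN conjunct2, THEN conjunct1])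
lemma Hl_G2: assumes "Hl N E" shows "(\<forall>v\<in>N. \<forall>w\<in>N. (\<forall>c\<in>N. E v c \<longrightarrow> E w c) \<longrightarrow> w = v)"
  by (rule assms[unfolded Hl_def, THEN conjunct2, THEN conjunct2, THEN conjunct1])
lemma Hl_G3: assumes "Hl N E" shows "(\<forall>v\<in>N. \<exists>a\<in>N. \<exists>b\<in>N. \<exists>c\<in>N. E a b \<and> E b c \<and> E c a \<and> (\<forall>d\<in>N. E v d \<longleftrightarrow> (d=a \<or> d=b \<or> d=c)))"
  by (rule assms[unfolded Hl_def, THEN conjunct2, THEN conjunct2, THEN conjunct2, THEN conjunct1])
lemma Hl_G4: assumes "Hl N E" shows "(\<forall>a\<in>N. \<forall>b\<in>N. \<forall>c\<in>N. E a b \<and> E b c \<and> E c a \<longrightarrow> (\<exists>w\<in>N. \<forall>d\<in>N. E w d \<longleftrightarrow> (d=a \<or> d=b \<or> d=c)))"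
  by (rule assms[unfolded Hl_def, THEN conjunct2, THEN conjunct2, THEN conjunct2, THEN conjunct2, THEN conjunct1])
lemma Hl_G5: assumes "Hl N E" shows "(\<forall>a\<in>N. card {z\<in>N. z \<noteq> a \<and> \<not> E a z \<and> \<not> E z a} = 1)"
  by (rule assms[unfolded Hl_def, THEN conjunct2, THEN conjunct2, THEN conjunct2, THEN conjunct2, THEN conjunct2, THEN conjunct1])
lemma Hl_G6: assumes "Hl N E" shows "(\<forall>a\<in>N. \<forall>z\<in>N. \<forall>c\<in>N. z \<noteq> a \<and> \<not> E a z \<and> \<not> E z a \<and> E a c \<longrightarrow> E c z)"
  by (rule assms[unfolded Hl_def, THEN conjunct2, THEN conjunct2, THEN conjunct2, THEN conjunct2, THEN conjunct2, THEN conjunct2, THEN conjunct1])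
lemma Hl_G7: assumes "Hl N E" shows "(\<forall>t\<in>N. \<forall>u\<in>N. u \<noteq> t \<and> \<not> E t u \<longrightarrow> ((\<exists>c\<in>N. E t c \<and> E u c) \<longrightarrow> card {c\<in>N. E t c \<and> E c u} \<le> 1) \<and> ((\<not> (\<exists>c\<in>N. E t c \<and> E u c)) \<longrightarrow> (\<forall>c\<in>N. E t c \<longrightarrow> E c u)))"
  by (rule assms[unfolded Hl_def, THEN conjunct2, THEN conjunct2, THEN conjunct2, THEN conjunct2, THEN conjunct2, THEN conjunct2, THEN conjunct2])

lemma Hl_P0: "Hl N E \<Longrightarrow> b \<in> N \<Longrightarrow> card {y\<in>N. E y b} = 3" using Hl_G0[of N E] by blast
lemma Hl_P1: "Hl N E \<Longrightarrow> b \<in> N \<Longrightarrow> card {y\<in>N. E b y} = 3" using Hl_G1[of N E] by blast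
lemma Hl_P2: "Hl N E \<Longrightarrow> v \<in> N \<Longrightarrow> w \<in> N \<Longrightarrow> (\<forall>c\<in>N. E v c \<longrightarrow> E w c) \<Longrightarrow> w = v"
  using Hl_G2[of N E] by blast
lemma Hl_P3: "Hl N E \<Longrightarrow> v \<in> N \<Longrightarrow> \<exists>a\<in>N. \<exists>b\<in>N. \<exists>c\<in>N. E a b \<and> E b c \<and> E c a \<and> (\<forall>d\<in>N. E v d \<longleftrightarrow> (d=a \<or> d=b \<or> d=c))"
  using Hl_G3[of N E] by blast
lemma Hl_P4: "Hl N E \<Longrightarrow> a \<in> N \<Longrightarrow> b \<in> N \<Longrightarrow> c \<in> N \<Longrightarrow> E a b \<Longrightarrow> E b c \<Longrightarrow> E c a \<Longrightarrow>
   \<exists>w\<in>N. \<forall>d\<in>N. E w d \<longleftrightarrow> (d=a \<or> d=b \<or> d=c)"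
  using Hl_G4[of N E] by blast
lemma Hl_P5: "Hl N E \<Longrightarrow> a \<in> N \<Longrightarrow> card {z\<in>N. z \<noteq> a \<and> \<not> E a z \<and> \<not> E z a} = 1"
  using Hl_G5[of N E] by blast
lemma Hl_P6: "Hl N E \<Longrightarrow> a \<in> N \<Longrightarrow> z \<in> N \<Longrightarrow> c \<in> N \<Longrightarrow> z \<noteq> a \<Longrightarrow> \<not> E a z \<Longrightarrow> \<not> E z a \<Longrightarrow> E a c \<Longrightarrow> E c z"
  using Hl_G6[of N E] by blast
lemma Hl_P7: "Hl N E \<Longrightarrow> t \<in> N \<Longrightarrow> u \<in> N \<Longrightarrow> u \<noteq> t \<Longrightarrow> \<not> E t u \<Longrightarrow>
     ((\<exists>c\<in>N. E t c \<and> E u c) \<longrightarrow> card {c\<in>N. E t c \<and> E c u} \<le> 1) \<and> ((\<not> (\<exists>c\<in>N. E t c \<and> E u c)) \<longrightarrow> (\<forall>c\<in>N. E t c \<longrightarrow> E c u))"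
  using Hl_G7[of N E] by blast

lemma dg_iso_comp: "dg_iso A E1 B E2 f \<Longrightarrow> dg_iso B E2 C E3 h \<Longrightarrow> dg_iso A E1 C E3 (h \<circ> f)"
  unfolding dg_iso_def by (auto simp: bij_betw_trans bij_betw_apply)

lemma dg_iso_inv: "dg_iso A E1 B E2 f \<Longrightarrow> dg_iso B E2 A E1 (inv_into A f)"
  unfolding dg_iso_def
proof (elim conjE, intro conjI ballI)
  assume b: "bij_betw f A B" and e: "\<forall>x\<in>A. \<forall>y\<in>A. E1 x y = E2 (f x) (f y)"
  show "bij_betw (inv_into A f) B A" using b by (rule bij_betw_inv_into)
  fix x y assume "x \<in> B" "y \<in> B"
  moreover have "\<And>z. z \<in> B \<Longrightarrow> inv_into A f z \<in> A \<and> f (inv_into A f z) = z"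
    using b by (meson bij_betw_apply bij_betw_inv_into bij_betw_inv_into_right)
  ultimately show "E2 x y = E1 (inv_into A f x) (inv_into A f y)" using e by metis
qed

lemma dg_iso_card: "dg_iso A E1 B E2 f \<Longrightarrow> card A = card B"
  unfolding dg_iso_def using bij_betw_same_card by blast

lemma double_count:
  assumes "finite S"
  shows "(\<Sum>u\<in>S. card {y\<in>S. R u y}) = (\<Sum>u\<in>S. card {y\<in>S. R y u})"
proof -
  have f: "\<forall>u\<in>S. finite {y\<in>S. R u y}" "\<forall>u\<in>S. finite {y\<in>S. R y u}" using assms by auto
  have "(\<Sum>u\<in>S. card {y\<in>S. R u y}) = card (SIGMA u:S. {y\<in>S. R u y})"
    using card_SigmaI[OF assms f(1)] by simp
  also have "(SIGMA u:S. {y\<in>S. R u y}) = prod.swap ` (SIGMA u:S. {y\<in>S. R y u})"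
    by (auto simp: image_iff)
  also have "card \<dots> = card (SIGMA u:S. {y\<in>S. R y u})"
    by (rule card_image) (simp add: inj_on_def)
  also have "\<dots> = (\<Sum>u\<in>S. card {y\<in>S. R y u})"
    using card_SigmaI[OF assms f(2)] by simp
  finally show ?thesis .
qed

lemma dg_iso_insert:
  assumes iso: "dg_iso N E N E h" and x: "x \<notin> N" and xa: "\<forall>y\<in>N. E x y \<and> \<not> E y x" and xx: "\<not> E x x"
  shows "dg_iso (insert x N) E (insert x N) E (\<lambda>y. if y = x then x else h y)"
proof -
  have b: "bij_betw h N N" and e: "\<forall>a\<in>N. \<forall>b\<in>N. E a b = E (h a) (h b)" using iso unfolding dg_iso_def by auto
  have hN: "\<And>y. y \<in> N \<Longrightarrow> h y \<in> N" using b by (simp add: bij_betw_apply)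
  have "bij_betw (\<lambda>y. if y = x then x else h y) (insert x N) (insert x N)"
  proof -
    have "inj_on (\<lambda>y. if y = x then x else h y) (insert x N)"
      using b x hN unfolding bij_betw_def inj_on_def by (metis insert_iff)
    moreover have "(\<lambda>y. if y = x then x else h y) ` (insert x N) = insert x N"
    proof -
      have im: "(\<lambda>y. if y = x then x else h y) ` N = h ` N" using x by (intro image_cong) auto
      have "(\<lambda>y. if y = x then x else h y) ` (insert x N) = insert x ((\<lambda>y. if y = x then x else h y) ` N)"
        by (simp only: image_insert if_True simp_thms)
      also have "\<dots> = insert x N" unfolding im using b unfolding bij_betw_def by simp
      finally show ?thesis .
    qed
    ultimately show ?thesis unfolding bij_betw_def by simp
  qed
  moreover have "\<forall>a\<in>insert x N. \<forall>b\<in>insert x N. E a b = E (if a = x then x else h a) (if b = x then x else h b)"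
    using e xa xx x hN by auto
  ultimately show ?thesis unfolding dg_iso_def by simp
qed

lemma four_contra:
  assumes "card Q = 3" "a\<in>Q" "b\<in>Q" "c\<in>Q" "d\<in>Q" "a\<noteq>b" "a\<noteq>c" "a\<noteq>d" "b\<noteq>c" "b\<noteq>d" "c\<noteq>d"
  shows False
proof -
  have fin: "finite Q" using assms(1) by (metis card.infinite zero_neq_numeral)
  have "card {a,b,c,d} = 4" using assms(6-11) by simp
  moreover have "{a,b,c,d} \<subseteq> Q" using assms(2-5) by simp
  ultimately have "4 \<le> card Q" using card_mono[OF fin] by metis
  thus False using assms(1) by simp
qed

locale CH =
  fixes V :: "'a set" and E :: "'a \<Rightarrow> 'a \<Rightarrow> bool" and x0 :: 'a and \<phi>0 :: "'a \<Rightarrow> bool\<times>nat"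
  assumes dg: "digraph V E" and lf: "locally_finite V E" and ch: "C_homogeneous V E"
    and x0V: "x0 \<in> V" and iso0: "dg_iso (out_nbhd V E x0) E H_vert H_edge \<phi>0"
begin

lemma EV: "E a b \<Longrightarrow> a \<in> V \<and> b \<in> V" using dg unfolding digraph_def by blast
lemma irr: "\<not> E a a" using dg unfolding digraph_def by blast
lemma asym: "E a b \<Longrightarrow> \<not> E b a" using dg unfolding digraph_def by blast

lemma mem_out: "z \<in> out_nbhd V E y \<longleftrightarrow> E y z"
  unfolding out_nbhd_def using EV by blast

lemma ext:
  assumes "A \<subseteq> V" "B \<subseteq> V" "finite A" "finite B" "connected_on E A" "connected_on E B" "dg_iso A E B E f"
  shows "\<exists>g. automorphism V E g \<and> (\<forall>x\<in>A. g x = f x)"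
  using ch[unfolded C_homogeneous_def, rule_format, of A B f] assms by blast

lemma aut_bij: "automorphism V E g \<Longrightarrow> bij_betw g V V"
  unfolding automorphism_def dg_iso_def by (erule conjunct1)
lemma aut_E: assumes "automorphism V E g" "a \<in> V" "b \<in> V" shows "E (g a) (g b) = E a b"
proof -
  have "\<forall>x\<in>V. \<forall>y\<in>V. E x y = E (g x) (g y)" using assms(1) unfolding automorphism_def dg_iso_def by (rule conjunct2)
  thus ?thesis using assms(2,3) by simp
qed
lemma aut_V: "automorphism V E g \<Longrightarrow> a \<in> V \<Longrightarrow> g a \<in> V"
  using aut_bij bij_betw_apply by fast
lemma aut_surj: assumes "automorphism V E g" "b \<in> V" shows "\<exists>a\<in>V. g a = b"
proof -
  have "g ` V = V" using aut_bij[OF assms(1)] unfolding bij_betw_def by (rule conjunct2)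
  hence "b \<in> g ` V" using assms(2) by simp
  thus ?thesis by (elim imageE) auto
qed
lemma aut_inj: "automorphism V E g \<Longrightarrow> inj_on g V"
  using aut_bij unfolding bij_betw_def by fast

lemma aut_out: assumes g: "automorphism V E g" and y: "y \<in> V"
  shows "g ` out_nbhd V E y = out_nbhd V E (g y)"
proof
  show "g ` out_nbhd V E y \<subseteq> out_nbhd V E (g y)"
    using aut_E[OF g y] EV by (auto simp: mem_out)
next
  show "out_nbhd V E (g y) \<subseteq> g ` out_nbhd V E y"
  proof
    fix z assume "z \<in> out_nbhd V E (g y)"
    hence z: "E (g y) z" by (simp add: mem_out)
    then obtain a where a: "a \<in> V" "g a = z" using aut_surj[OF g] EV by blast
    hence "E y a" using z aut_E[OF g y a(1)] by simp
    thus "z \<in> g ` out_nbhd V E y" using a by (auto simp: mem_out)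
  qed
qed

lemma aut_cin: assumes g: "automorphism V E g" and a: "a \<in> V" and b: "b \<in> V"
  shows "g ` {y\<in>V. E y a \<and> E y b} = {y\<in>V. E y (g a) \<and> E y (g b)}"
proof
  show "g ` {y\<in>V. E y a \<and> E y b} \<subseteq> {y\<in>V. E y (g a) \<and> E y (g b)}"
    using aut_E[OF g] aut_V[OF g] a b by auto
next
  show "{y\<in>V. E y (g a) \<and> E y (g b)} \<subseteq> g ` {y\<in>V. E y a \<and> E y b}"
  proof
    fix z assume z: "z \<in> {y\<in>V. E y (g a) \<and> E y (g b)}"
    then obtain c where c: "c \<in> V" "g c = z" using aut_surj[OF g] by blast
    thus "z \<in> g ` {y\<in>V. E y a \<and> E y b}" using z aut_E[OF g c(1)] a b by auto
  qed
qed

lemma conn: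
  assumes c: "c \<in> A" and adj: "\<forall>y\<in>A. y = c \<or> E c y \<or> E y c"
  shows "connected_on E A"
  unfolding connected_on_def
proof (intro ballI)
  let ?R = "\<lambda>u v. u \<in> A \<and> v \<in> A \<and> (E u v \<or> E v u)"
  have to: "?R\<^sup>*\<^sup>* y c" if "y \<in> A" for y
    using adj that c by (metis (mono_tags, lifting) r_into_rtranclp rtranclp.rtrancl_refl)
  have from_c: "?R\<^sup>*\<^sup>* c y" if "y \<in> A" for y
    using adj that c by (metis (mono_tags, lifting) r_into_rtranclp rtranclp.rtrancl_refl)
  fix x y assume "x \<in> A" "y \<in> A"
  thus "?R\<^sup>*\<^sup>* x y" using to from_c by (meson rtranclp_trans)
qed

lemma iso_out: assumes y: "y \<in> V" shows "\<exists>\<phi>. dg_iso (out_nbhd V E y) E H_vert H_edge \<phi>"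
proof -
  have "dg_iso {x0} E {y} E (\<lambda>_. y)" unfolding dg_iso_def using irr by (simp add: bij_betw_def)
  moreover have "connected_on E {x0}" "connected_on E {y}" by (rule conn, simp, simp)+
  ultimately obtain g where g: "automorphism V E g" "g x0 = y"
    using ext[of "{x0}" "{y}" "\<lambda>_. y"] x0V y by auto
  have sub: "out_nbhd V E x0 \<subseteq> V" unfolding out_nbhd_def by blast
  have "dg_iso (out_nbhd V E x0) E (out_nbhd V E y) E g"
    unfolding dg_iso_def
  proof
    show "bij_betw g (out_nbhd V E x0) (out_nbhd V E y)"
      unfolding bij_betw_def using aut_out[OF g(1) x0V] g(2) inj_on_subset[OF aut_inj[OF g(1)] sub] by simp
    show "\<forall>a\<in>out_nbhd V E x0. \<forall>b\<in>out_nbhd V E x0. E a b = E (g a) (g b)"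
      using aut_E[OF g(1)] sub by auto
  qed
  from dg_iso_comp[OF dg_iso_inv[OF this] iso0] show ?thesis by blast
qed

lemma Hl_out: "y \<in> V \<Longrightarrow> Hl (out_nbhd V E y) E"
  using iso_out iso_Hl HHl by blast

lemma card_out: "y \<in> V \<Longrightarrow> card (out_nbhd V E y) = 8"
  using iso_out dg_iso_card Hcard by metis

lemma fin_out: "y \<in> V \<Longrightarrow> finite (out_nbhd V E y)"
  using card_out by (metis card.infinite zero_neq_numeral)


lemma arc_trans: assumes ab: "E a b" and cd: "E c d"
  shows "card {y\<in>V. E y a \<and> E y b} = card {y\<in>V. E y c \<and> E y d}"
proof -
  have V: "a\<in>V" "b\<in>V" "c\<in>V" "d\<in>V" using EV ab cd by auto
  have abne: "a \<noteq> b" "c \<noteq> d" using irr ab cd by metis+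
  have ba: "\<not> E b a" "\<not> E d c" using asym ab cd by auto
  let ?f = "\<lambda>z. if z = a then c else d"
  have bij: "bij_betw ?f {a,b} {c,d}"
    unfolding bij_betw_def inj_on_def using abne by auto
  have ed: "\<forall>x\<in>{a,b}. \<forall>y\<in>{a,b}. E x y = E (?f x) (?f y)"
    using abne ab cd irr ba by auto
  have iso: "dg_iso {a,b} E {c,d} E ?f" unfolding dg_iso_def using bij ed by blast
  have c1: "connected_on E {a,b}" by (rule conn[of a]) (use ab in auto)
  have c2: "connected_on E {c,d}" by (rule conn[of c]) (use cd in auto)
  have "\<exists>g. automorphism V E g \<and> (\<forall>x\<in>{a,b}. g x = ?f x)"
    by (rule ext[OF _ _ _ _ c1 c2 iso]) (use V in auto)
  then obtain g where g: "automorphism V E g" "\<forall>x\<in>{a,b}. g x = ?f x" by blast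
  have ga: "g a = c" "g b = d" using g(2) abne by auto
  have im: "g ` {y\<in>V. E y a \<and> E y b} = {y\<in>V. E y c \<and> E y d}" using aut_cin[OF g(1) V(1,2)] ga by simp
  have inj: "inj_on g {y\<in>V. E y a \<and> E y b}" using aut_inj[OF g(1)] by (rule inj_on_subset) auto
  show ?thesis using card_image[OF inj] im by simp
qed

lemma out_nonempty: "\<exists>b. E x0 b"
proof -
  have "card (out_nbhd V E x0) = 8" by (rule card_out[OF x0V])
  hence "out_nbhd V E x0 \<noteq> {}" by auto
  thus ?thesis by (auto simp: mem_out)
qed

lemma qcard: assumes ab: "E a b" shows "card {y\<in>V. E y a \<and> E y b} = 3"
proof -
  obtain b0 where b0: "E x0 b0" using out_nonempty by blast
  have b0V: "b0 \<in> V" using EV b0 by blast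
  let ?S = "{y\<in>V. E y b0}"
  let ?k = "card {y\<in>V. E y x0 \<and> E y b0}"
  have fin: "finite ?S"
  proof -
    have "finite {y\<in>V. E b0 y \<or> E y b0}" using lf b0V unfolding locally_finite_def by blast
    thus ?thesis by (rule finite_subset[rotated]) auto
  qed
  have S1: "card {y\<in>?S. E u y} = 3" if u: "u \<in> ?S" for u
  proof -
    have uV: "u \<in> V" using u by simp
    have "{y\<in>?S. E u y} = {y\<in>out_nbhd V E u. E y b0}" by (auto simp: mem_out dest: EV)
    moreover have "b0 \<in> out_nbhd V E u" using u by (simp add: mem_out)
    ultimately show ?thesis using Hl_P0[OF Hl_out[OF uV]] by simp
  qed
  have S2: "card {y\<in>?S. E y u} = ?k" if u: "u \<in> ?S" for u
  proof -
    have "{y\<in>?S. E y u} = {y\<in>V. E y u \<and> E y b0}" by auto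
    thus ?thesis using arc_trans[of u b0 x0 b0] u b0 by simp
  qed
  have "(\<Sum>u\<in>?S. card {y\<in>?S. E u y}) = (\<Sum>u\<in>?S. card {y\<in>?S. E y u})" by (rule double_count[OF fin])
  moreover have "(\<Sum>u\<in>?S. card {y\<in>?S. E u y}) = (\<Sum>u\<in>?S. 3)" by (rule sum.cong[OF refl]) (rule S1)
  moreover have "(\<Sum>u\<in>?S. card {y\<in>?S. E y u}) = (\<Sum>u\<in>?S. ?k)" by (rule sum.cong[OF refl]) (rule S2)
  ultimately have eq: "card ?S * 3 = card ?S * ?k" by simp
  have "x0 \<in> ?S" using b0 x0V by simp
  hence "card ?S \<noteq> 0" using fin by auto
  hence "?k = 3" using eq by simp
  thus ?thesis using arc_trans[OF ab b0] by simp
qed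

definition Cspec :: "'a \<Rightarrow> 'a \<Rightarrow> bool" where
  "Cspec v s \<longleftrightarrow> E v s \<and> E s x0 \<and> (\<forall>d. (E s d \<and> E x0 d) = (E v d \<and> E x0 d)) \<and> (\<forall>d. (E v d \<and> E s d) = (E v d \<and> E x0 d))"

lemma s_ex: assumes v: "E x0 v" shows "\<exists>s. Cspec v s"
proof -
  have vV: "v \<in> V" using EV v by blast
  have vO: "v \<in> out_nbhd V E x0" by (simp add: mem_out v)
  from Hl_P3[OF Hl_out[OF x0V] vO] obtain a b c where abc: "a \<in> out_nbhd V E x0" "b \<in> out_nbhd V E x0"
    "c \<in> out_nbhd V E x0" "E a b" "E b c" "E c a" and Cv: "\<forall>d\<in>out_nbhd V E x0. E v d \<longleftrightarrow> (d=a \<or> d=b \<or> d=c)"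
    by blast
  have va: "E v a" "E v b" "E v c" using Cv abc(1-3) by auto
  have xa: "E x0 a" "E x0 b" "E x0 c" using abc(1-3) by (simp_all add: mem_out)
  have inv: "a \<in> out_nbhd V E v" "b \<in> out_nbhd V E v" "c \<in> out_nbhd V E v" using va by (simp_all add: mem_out)
  from Hl_P4[OF Hl_out[OF vV] inv abc(4-6)] obtain s where s: "s \<in> out_nbhd V E v"
    "\<forall>d\<in>out_nbhd V E v. E s d \<longleftrightarrow> (d=a \<or> d=b \<or> d=c)" by blast
  have vs: "E v s" using s(1) by (simp add: mem_out)
  have sV: "s \<in> V" using EV vs by blast
  have sa: "E s a" "E s b" "E s c" using s(2) inv by auto
  have ins: "a \<in> out_nbhd V E s" "b \<in> out_nbhd V E s" "c \<in> out_nbhd V E s" using sa by (simp_all add: mem_out)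
  from Hl_P4[OF Hl_out[OF sV] ins abc(4-6)] obtain s2 where s2: "s2 \<in> out_nbhd V E s"
    "\<forall>d\<in>out_nbhd V E s. E s2 d \<longleftrightarrow> (d=a \<or> d=b \<or> d=c)" by blast
  have ss2: "E s s2" using s2(1) by (simp add: mem_out)
  have s2a: "E s2 a" "E s2 b" using s2(2) ins by auto
  have "s2 = x0"
  proof (rule ccontr)
    assume ne: "s2 \<noteq> x0"
    have cq: "card {y\<in>V. E y a \<and> E y b} = 3" by (rule qcard) (rule abc(4))
    have m: "x0 \<in> {y\<in>V. E y a \<and> E y b}" "v \<in> {y\<in>V. E y a \<and> E y b}" "s \<in> {y\<in>V. E y a \<and> E y b}"
      "s2 \<in> {y\<in>V. E y a \<and> E y b}" using xa va sa s2a x0V vV sV EV by auto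
    have d: "x0 \<noteq> v" "x0 \<noteq> s" "x0 \<noteq> s2" "v \<noteq> s" "v \<noteq> s2" "s \<noteq> s2"
      using v vs ss2 ne irr asym by metis+
    show False by (rule four_contra[OF cq m d])
  qed
  hence sx: "E s x0" using ss2 by simp
  have e1: "(E s d \<and> E x0 d) = (E v d \<and> E x0 d)" for d
  proof
    assume h: "E s d \<and> E x0 d"
    hence "d \<in> out_nbhd V E s" by (simp add: mem_out)
    hence "d = a \<or> d = b \<or> d = c" using s2(2) \<open>s2 = x0\<close> h by auto
    thus "E v d \<and> E x0 d" using va xa by auto
  next
    assume h: "E v d \<and> E x0 d"
    hence "d \<in> out_nbhd V E x0" by (simp add: mem_out)
    hence "d = a \<or> d = b \<or> d = c" using Cv h by auto
    thus "E s d \<and> E x0 d" using sa h by auto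
  qed
  have e2: "(E v d \<and> E s d) = (E v d \<and> E x0 d)" for d
  proof
    assume h: "E v d \<and> E s d"
    hence "d \<in> out_nbhd V E v" by (simp add: mem_out)
    hence "d = a \<or> d = b \<or> d = c" using s(2) h by auto
    thus "E v d \<and> E x0 d" using va xa by auto
  next
    assume h: "E v d \<and> E x0 d"
    hence "d \<in> out_nbhd V E x0" by (simp add: mem_out)
    hence "d = a \<or> d = b \<or> d = c" using Cv h by auto
    thus "E v d \<and> E s d" using sa h by auto
  qed
  show ?thesis unfolding Cspec_def using vs sx e1 e2 by blast
qed

lemma U: assumes u: "E u x0" and u': "E u' x0" and v: "E x0 v"
  and cu: "\<forall>d. E v d \<and> E x0 d \<longrightarrow> E u d" and cu': "\<forall>d. E v d \<and> E x0 d \<longrightarrow> E u' d"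
  shows "u = u'"
proof (rule ccontr)
  assume ne: "u \<noteq> u'"
  have vO: "v \<in> out_nbhd V E x0" by (simp add: mem_out v)
  from Hl_P3[OF Hl_out[OF x0V] vO] obtain a b c where abc: "a \<in> out_nbhd V E x0" "b \<in> out_nbhd V E x0"
    "c \<in> out_nbhd V E x0" "E a b" "E b c" "E c a" and Cv: "\<forall>d\<in>out_nbhd V E x0. E v d \<longleftrightarrow> (d=a \<or> d=b \<or> d=c)"
    by blast
  have va: "E v a" "E v b" using Cv abc(1-3) by auto
  have xa: "E x0 a" "E x0 b" using abc(1-3) by (simp_all add: mem_out)
  have cq: "card {y\<in>V. E y a \<and> E y b} = 3" by (rule qcard) (rule abc(4))
  have m: "x0 \<in> {y\<in>V. E y a \<and> E y b}" "v \<in> {y\<in>V. E y a \<and> E y b}" "u \<in> {y\<in>V. E y a \<and> E y b}"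
      "u' \<in> {y\<in>V. E y a \<and> E y b}" using xa va cu cu' x0V EV u u' v by auto
  have d: "x0 \<noteq> v" "x0 \<noteq> u" "x0 \<noteq> u'" "v \<noteq> u" "v \<noteq> u'" "u \<noteq> u'"
    using v u u' ne irr asym by metis+
  show False by (rule four_contra[OF cq m d])
qed

definition sf :: "'a \<Rightarrow> 'a" where "sf v = (SOME s. Cspec v s)"

lemma sf: "E x0 v \<Longrightarrow> Cspec v (sf v)"
  unfolding sf_def by (rule someI_ex[OF s_ex])

lemma sf1: "E x0 v \<Longrightarrow> E v (sf v)" using sf unfolding Cspec_def by blast
lemma sf2: "E x0 v \<Longrightarrow> E (sf v) x0" using sf unfolding Cspec_def by blast
lemma sf3: "E x0 v \<Longrightarrow> (E (sf v) d \<and> E x0 d) = (E v d \<and> E x0 d)" using sf unfolding Cspec_def by blast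
lemma sf4: "E x0 v \<Longrightarrow> (E v d \<and> E (sf v) d) = (E v d \<and> E x0 d)" using sf unfolding Cspec_def by blast

lemma char: assumes u: "E u x0" shows "\<exists>w. E x0 w \<and> u = sf w"
proof -
  have uV: "u \<in> V" using EV u by blast
  have xO: "x0 \<in> out_nbhd V E u" by (simp add: mem_out u)
  from Hl_P3[OF Hl_out[OF uV] xO] obtain a b c where abc: "a \<in> out_nbhd V E u" "b \<in> out_nbhd V E u"
    "c \<in> out_nbhd V E u" "E a b" "E b c" "E c a" and Cv: "\<forall>d\<in>out_nbhd V E u. E x0 d \<longleftrightarrow> (d=a \<or> d=b \<or> d=c)"
    by blast
  have xa: "E x0 a" "E x0 b" "E x0 c" using Cv abc(1-3) by auto
  have inO: "a \<in> out_nbhd V E x0" "b \<in> out_nbhd V E x0" "c \<in> out_nbhd V E x0" using xa by (simp_all add: mem_out)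
  from Hl_P4[OF Hl_out[OF x0V] inO abc(4-6)] obtain w where w: "w \<in> out_nbhd V E x0"
    "\<forall>d\<in>out_nbhd V E x0. E w d \<longleftrightarrow> (d=a \<or> d=b \<or> d=c)" by blast
  have xw: "E x0 w" using w(1) by (simp add: mem_out)
  have cu: "\<forall>d. E w d \<and> E x0 d \<longrightarrow> E u d"
  proof (intro allI impI)
    fix d assume h: "E w d \<and> E x0 d"
    hence "d \<in> out_nbhd V E x0" by (simp add: mem_out)
    hence "d=a \<or> d=b \<or> d=c" using w(2) h by auto
    thus "E u d" using abc(1-3) by (auto simp: mem_out)
  qed
  have cu': "\<forall>d. E w d \<and> E x0 d \<longrightarrow> E (sf w) d" using sf3[OF xw] by blast
  have "u = sf w" by (rule U[OF u sf2[OF xw] xw cu cu'])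
  thus ?thesis using xw by blast
qed


lemma Zbound: assumes v: "E x0 v"
  shows "card {d\<in>out_nbhd V E v. \<not> E x0 d \<and> \<not> E d x0} \<le> 3"
proof -
  let ?Z = "{d\<in>out_nbhd V E v. \<not> E x0 d \<and> \<not> E d x0}"
  have vV: "v \<in> V" using EV v by blast
  have vO: "v \<in> out_nbhd V E x0" by (simp add: mem_out v)
  have "card {y\<in>out_nbhd V E x0. E v y} = 3" by (rule Hl_P1[OF Hl_out[OF x0V] vO])
  hence "{y\<in>out_nbhd V E x0. E v y} \<noteq> {}" by (metis card.empty zero_neq_numeral)
  then obtain c0 where "c0 \<in> out_nbhd V E x0" "E v c0" by blast
  hence c0: "E v c0" "E x0 c0" by (simp_all add: mem_out)
  have c0O: "c0 \<in> out_nbhd V E x0" by (simp add: mem_out c0)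
  have "card {z\<in>out_nbhd V E x0. z \<noteq> v \<and> \<not> E v z \<and> \<not> E z v} = 1" by (rule Hl_P5[OF Hl_out[OF x0V] vO])
  then obtain z0 where "{z\<in>out_nbhd V E x0. z \<noteq> v \<and> \<not> E v z \<and> \<not> E z v} = {z0}" by (rule card_1_singletonE)
  hence z0: "z0 \<in> out_nbhd V E x0" "z0 \<noteq> v" "\<not> E v z0" "\<not> E z0 v" by auto
  have cz0: "E c0 z0" by (rule Hl_P6[OF Hl_out[OF x0V] vO z0(1) c0O z0(2-4) c0(1)])
  have xz0: "E x0 z0" using z0(1) by (simp add: mem_out)
  let ?Qx = "{y\<in>V. E y x0 \<and> E y v}"
  have cQ: "card ?Qx = 3" by (rule qcard[OF v])
  have finQ: "finite ?Qx" using cQ by (metis card.infinite zero_neq_numeral)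
  have key: "\<exists>r\<in>?Qx. E r z" if z: "z \<in> ?Z" for z
  proof -
    have vz: "E v z" "\<not> E x0 z" "\<not> E z x0" using z by (auto simp: mem_out)
    have zV: "z \<in> V" using EV vz(1) by blast
    have c0V: "c0 \<in> V" "z0 \<in> V" using EV c0 cz0 by auto
    have ne: "v \<noteq> c0" "c0 \<noteq> z0" "v \<noteq> z0" "x0 \<noteq> v" "v \<noteq> z" "x0 \<noteq> z"
      using c0(1) irr apply metis
      using cz0 irr apply metis
      using z0(2) apply metis
      using v irr apply metis
      using vz(1) irr apply metis
      using vz(1) asym[OF v] by metis
    have na: "\<not> E c0 v" "\<not> E z0 c0" "\<not> E v x0" "\<not> E z v" using c0(1) cz0 v vz(1) asym by auto
    define f where "f y = (if y = v then x0 else if y = c0 then v else z)" for y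
    have fv: "f v = x0" "f c0 = v" "f z0 = z" unfolding f_def using ne by auto
    have bij: "bij_betw f {v,c0,z0} {x0,v,z}"
      unfolding bij_betw_def using ne by (simp add: fv)
    have ed: "\<forall>p\<in>{v,c0,z0}. \<forall>q\<in>{v,c0,z0}. E p q = E (f p) (f q)"
      using na c0(1) cz0 z0(3,4) v vz by (simp add: fv irr)
    have iso: "dg_iso {v,c0,z0} E {x0,v,z} E f" unfolding dg_iso_def using bij ed by blast
    have cA: "connected_on E {v,c0,z0}" by (rule conn[of c0]) (use c0(1) cz0 in auto)
    have cB: "connected_on E {x0,v,z}" by (rule conn[of v]) (use v vz(1) in auto)
    have "\<exists>g. automorphism V E g \<and> (\<forall>x\<in>{v,c0,z0}. g x = f x)"
      by (rule ext[OF _ _ _ _ cA cB iso]) (use vV c0V zV x0V in auto)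
    then obtain g where g: "automorphism V E g" "\<forall>x\<in>{v,c0,z0}. g x = f x" by blast
    have gv: "g v = x0" "g c0 = v" "g z0 = z" using g(2) fv by auto
    have r1: "E (g x0) x0" using aut_E[OF g(1) x0V vV] v gv by simp
    have r2: "E (g x0) v" using aut_E[OF g(1) x0V c0V(1)] c0(2) gv by simp
    have r3: "E (g x0) z" using aut_E[OF g(1) x0V c0V(2)] xz0 gv by simp
    have rV: "g x0 \<in> V" by (rule aut_V[OF g(1) x0V])
    show ?thesis using r1 r2 r3 rV by blast
  qed
  have "\<exists>F. \<forall>z\<in>?Z. F z \<in> ?Qx \<and> E (F z) z" by (rule bchoice) (use key in blast)
  then obtain F where FF: "\<forall>z\<in>?Z. F z \<in> ?Qx \<and> E (F z) z" by blast
  have F: "F z \<in> ?Qx \<and> E (F z) z" if "z \<in> ?Z" for z using FF that by blast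
  have inj: "inj_on F ?Z"
  proof (rule inj_onI)
    fix z1 z2 assume z1: "z1 \<in> ?Z" and z2: "z2 \<in> ?Z" and eq: "F z1 = F z2"
    define r where "r = F z1"
    have r0: "r \<in> ?Qx \<and> E r z1" using F[OF z1] unfolding r_def .
    have r0': "r \<in> ?Qx \<and> E r z2" using F[OF z2] eq unfolding r_def by simp
    have r1: "r \<in> V" "E r x0" "E r z1" "E r z2" using r0 r0' by simp_all
    have z1': "E v z1" "\<not> E x0 z1" "\<not> E z1 x0" using z1 by (simp_all add: mem_out)
    have z2': "E v z2" "\<not> E x0 z2" "\<not> E z2 x0" using z2 by (simp_all add: mem_out)
    have ne1: "z1 \<noteq> x0" using z1'(1) asym[OF v] by blast
    have ne2: "z2 \<noteq> x0" using z2'(1) asym[OF v] by blast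
    define P where "P = {z\<in>out_nbhd V E r. z \<noteq> x0 \<and> \<not> E x0 z \<and> \<not> E z x0}"
    have xr: "x0 \<in> out_nbhd V E r" by (simp add: mem_out r1(2))
    have cP: "card P = 1" unfolding P_def by (rule Hl_P5[OF Hl_out[OF r1(1)] xr])
    have m: "z1 \<in> P" "z2 \<in> P" unfolding P_def using r1 z1' z2' ne1 ne2 by (simp_all add: mem_out)
    show "z1 = z2" using cP m by (metis card_1_singletonE singletonD)
  qed
  have "card ?Z \<le> card ?Qx" by (rule card_inj_on_le[OF inj _ finQ]) (use F in blast)
  thus ?thesis using cQ by simp
qed

lemma pge2: assumes v: "E x0 v" shows "\<exists>u. E v u \<and> E u x0 \<and> u \<noteq> sf v"
proof (rule ccontr)
  assume na: "\<not> (\<exists>u. E v u \<and> E u x0 \<and> u \<noteq> sf v)"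
  have vV: "v \<in> V" using EV v by blast
  have vO: "v \<in> out_nbhd V E x0" by (simp add: mem_out v)
  let ?Ov = "out_nbhd V E v"
  let ?C = "{d\<in>?Ov. E x0 d}"
  let ?M = "{d\<in>?Ov. E d x0}"
  let ?Z = "{d\<in>?Ov. \<not> E x0 d \<and> \<not> E d x0}"
  have cO: "card ?Ov = 8" by (rule card_out[OF vV])
  have "?C = {y\<in>out_nbhd V E x0. E v y}" by (auto simp: mem_out)
  hence cC: "card ?C = 3" using Hl_P1[OF Hl_out[OF x0V] vO] by simp
  have cZ: "card ?Z \<le> 3" by (rule Zbound[OF v])
  have sub: "?M \<subseteq> {sf v}"
  proof
    fix u assume "u \<in> ?M"
    hence "E v u" "E u x0" by (simp_all add: mem_out)
    hence "u = sf v" using na by blast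
    thus "u \<in> {sf v}" by simp
  qed
  have "card ?M \<le> card {sf v}" by (rule card_mono[OF _ sub]) simp
  hence cM: "card ?M \<le> 1" by simp
  have fin: "finite ?Ov" by (rule fin_out[OF vV])
  have "?Ov \<subseteq> ?C \<union> ?M \<union> ?Z" by blast
  hence "card ?Ov \<le> card (?C \<union> ?M \<union> ?Z)" by (rule card_mono[rotated]) (use fin in simp)
  also have "\<dots> \<le> card (?C \<union> ?M) + card ?Z" by (rule card_Un_le)
  also have "\<dots> \<le> card ?C + card ?M + card ?Z" using card_Un_le[of ?C ?M] by simp
  finally show False using cO cC cZ cM by simp
qed


definition W :: "bool\<times>nat \<Rightarrow> 'a" where "W h = inv_into (out_nbhd V E x0) \<phi>0 h"
definition Rr :: "bool\<times>nat \<Rightarrow> bool\<times>nat \<Rightarrow> bool" where "Rr a b \<longleftrightarrow> E (W a) (sf (W b))"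

lemma bij0: "bij_betw \<phi>0 (out_nbhd V E x0) H_vert" using iso0 unfolding dg_iso_def by (rule conjunct1)
lemma E0: "a \<in> out_nbhd V E x0 \<Longrightarrow> b \<in> out_nbhd V E x0 \<Longrightarrow> E a b = H_edge (\<phi>0 a) (\<phi>0 b)"
  using iso0 unfolding dg_iso_def by blast
lemma W_in: "h \<in> H_vert \<Longrightarrow> E x0 (W h)"
proof -
  assume "h \<in> H_vert"
  hence "W h \<in> out_nbhd V E x0" unfolding W_def by (rule bij_betw_apply[OF bij_betw_inv_into[OF bij0]])
  thus ?thesis by (simp add: mem_out)
qed
lemma phiW: "h \<in> H_vert \<Longrightarrow> \<phi>0 (W h) = h"
  unfolding W_def by (rule bij_betw_inv_into_right[OF bij0])
lemma Wphi: "E x0 y \<Longrightarrow> W (\<phi>0 y) = y"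
  unfolding W_def by (rule bij_betw_inv_into_left[OF bij0]) (simp add: mem_out)
lemma phi_in: "E x0 y \<Longrightarrow> \<phi>0 y \<in> H_vert"
  by (rule bij_betw_apply[OF bij0]) (simp add: mem_out)
lemma EW: "a \<in> H_vert \<Longrightarrow> b \<in> H_vert \<Longrightarrow> E (W a) (W b) = H_edge a b"
proof -
  assume a: "a \<in> H_vert" and b: "b \<in> H_vert"
  have "E (W a) (W b) = H_edge (\<phi>0 (W a)) (\<phi>0 (W b))"
    by (rule E0) (simp_all add: mem_out W_in a b)
  thus ?thesis using phiW a b by simp
qed
lemma W_inj: "a \<in> H_vert \<Longrightarrow> b \<in> H_vert \<Longrightarrow> W a = W b \<Longrightarrow> a = b"
  by (metis phiW)

lemma R1: "\<forall>b\<in>H_vert. Rr b b"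
  unfolding Rr_def using sf1 W_in by blast

lemma R2: "\<forall>a\<in>H_vert. \<forall>b\<in>H_vert. H_edge b a \<longrightarrow> \<not> Rr a b"
proof (intro ballI impI)
  fix a b assume a: "a \<in> H_vert" and b: "b \<in> H_vert" and e: "H_edge b a"
  have "E (W b) (W a)" using EW[OF b a] e by simp
  moreover have "E x0 (W a)" by (rule W_in[OF a])
  ultimately have "E (sf (W b)) (W a)" using sf3[OF W_in[OF b]] by blast
  thus "\<not> Rr a b" unfolding Rr_def using asym by blast
qed

lemma R3: "\<forall>a\<in>H_vert. \<forall>b\<in>H_vert. a \<noteq> b \<and> Rr a b \<longrightarrow>
     ((\<exists>c\<in>H_vert. H_edge a c \<and> H_edge b c) \<longrightarrow> (\<forall>c1\<in>H_vert. \<forall>c2\<in>H_vert. H_edge a c1 \<and> H_edge a c2 \<and> Rr c1 b \<and> Rr c2 b \<longrightarrow> c1 = c2))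
   \<and> ((\<not> (\<exists>c\<in>H_vert. H_edge a c \<and> H_edge b c)) \<longrightarrow> (\<forall>c\<in>H_vert. H_edge a c \<longrightarrow> Rr c b))"
proof (intro ballI impI, rule conjI)
  fix a b assume a: "a \<in> H_vert" and b: "b \<in> H_vert" and ab: "a \<noteq> b \<and> Rr a b"
  define v where "v = W a"
  define w where "w = W b"
  define t where "t = sf v"
  define u where "u = sf w"
  have xv: "E x0 v" "E x0 w" unfolding v_def w_def using W_in a b by auto
  have vV: "v \<in> V" using EV xv by blast
  have vu: "E v u" using ab unfolding Rr_def v_def u_def w_def by simp
  have ux: "E u x0" unfolding u_def by (rule sf2[OF xv(2)])
  have vt: "E v t" unfolding t_def by (rule sf1[OF xv(1)])
  have tO: "t \<in> out_nbhd V E v" "u \<in> out_nbhd V E v" using vt vu by (simp_all add: mem_out)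
  have ut: "u \<noteq> t"
  proof
    assume eq: "u = t"
    have "\<forall>c\<in>out_nbhd V E x0. E v c \<longrightarrow> E w c"
    proof (intro ballI impI)
      fix c assume c: "c \<in> out_nbhd V E x0" and vc: "E v c"
      have xc: "E x0 c" using c by (simp add: mem_out)
      have "E t c" using sf3[OF xv(1), of c] xc vc unfolding t_def by blast
      hence "E u c" using eq by simp
      thus "E w c" using sf3[OF xv(2), of c] xc unfolding u_def by blast
    qed
    hence "w = v" by (rule Hl_P2[OF Hl_out[OF x0V], rotated 2]) (simp_all add: mem_out xv)
    hence "a = b" using W_inj[OF a b] unfolding v_def w_def by simp
    thus False using ab by simp
  qed
  have ntu: "\<not> E t u"
  proof
    assume "E t u"
    hence "E x0 u" using sf4[OF xv(1), of u] vu unfolding t_def by blast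
    thus False using ux asym by blast
  qed
  note P = Hl_P7[OF Hl_out[OF vV] tO(1) tO(2) ut ntu]
  have T1: "E t c = E x0 c" if "E v c" for c using sf4[OF xv(1), of c] that unfolding t_def by blast
  have T2: "E v (W h) = H_edge a h" if "h \<in> H_vert" for h using EW[OF a that] unfolding v_def .
  have T3: "E u (W h) = H_edge b h" if "h \<in> H_vert" for h
    using sf3[OF xv(2), of "W h"] W_in[OF that] EW[OF b that] unfolding u_def w_def by blast
  have T4: "E (W h) u = Rr h b" if "h \<in> H_vert" for h unfolding Rr_def u_def w_def by simp
  show "(\<exists>c\<in>H_vert. H_edge a c \<and> H_edge b c) \<longrightarrow> (\<forall>c1\<in>H_vert. \<forall>c2\<in>H_vert. H_edge a c1 \<and> H_edge a c2 \<and> Rr c1 b \<and> Rr c2 b \<longrightarrow> c1 = c2)"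
  proof (intro impI)
    assume "\<exists>c\<in>H_vert. H_edge a c \<and> H_edge b c"
    then obtain h where h: "h \<in> H_vert" "H_edge a h" "H_edge b h" by blast
    have "W h \<in> out_nbhd V E v" "E t (W h)" "E u (W h)"
      using T1 T2 T3 h W_in by (simp_all add: mem_out)
    hence "\<exists>c\<in>out_nbhd V E v. E t c \<and> E u c" by blast
    hence cd: "card {c\<in>out_nbhd V E v. E t c \<and> E c u} \<le> 1" using P by blast
    have fin: "finite {c\<in>out_nbhd V E v. E t c \<and> E c u}" using fin_out[OF vV] by simp
    show "\<forall>c1\<in>H_vert. \<forall>c2\<in>H_vert. H_edge a c1 \<and> H_edge a c2 \<and> Rr c1 b \<and> Rr c2 b \<longrightarrow> c1 = c2"
    proof (intro ballI impI)
    fix c1 c2 assume c1: "c1 \<in> H_vert" and c2: "c2 \<in> H_vert"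
      and cc: "H_edge a c1 \<and> H_edge a c2 \<and> Rr c1 b \<and> Rr c2 b"
    have "W c1 \<in> {c\<in>out_nbhd V E v. E t c \<and> E c u}" "W c2 \<in> {c\<in>out_nbhd V E v. E t c \<and> E c u}"
      using T1 T2 T4 c1 c2 cc W_in by (simp_all add: mem_out)
    hence "W c1 = W c2" using cd card_le_Suc0_iff_eq[OF fin] by auto
    thus "c1 = c2" by (rule W_inj[OF c1 c2])
    qed
  qed
  show "(\<not> (\<exists>c\<in>H_vert. H_edge a c \<and> H_edge b c)) \<longrightarrow> (\<forall>c\<in>H_vert. H_edge a c \<longrightarrow> Rr c b)"
  proof (intro impI)
    assume nex: "\<not> (\<exists>c\<in>H_vert. H_edge a c \<and> H_edge b c)"
    have "\<not> (\<exists>c\<in>out_nbhd V E v. E t c \<and> E u c)"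
    proof
      assume "\<exists>c\<in>out_nbhd V E v. E t c \<and> E u c"
      then obtain c where c: "E v c" "E t c" "E u c" by (auto simp: mem_out)
      have xc: "E x0 c" using T1[OF c(1)] c(2) by simp
      have h: "\<phi>0 c \<in> H_vert" "W (\<phi>0 c) = c" using phi_in[OF xc] Wphi[OF xc] by auto
      have "H_edge a (\<phi>0 c)" using T2[OF h(1)] h(2) c(1) by simp
      moreover have "H_edge b (\<phi>0 c)" using T3[OF h(1)] h(2) c(3) by simp
      ultimately show False using nex h(1) by blast
    qed
    hence al: "\<forall>c\<in>out_nbhd V E v. E t c \<longrightarrow> E c u" using P by blast
    show "\<forall>c\<in>H_vert. H_edge a c \<longrightarrow> Rr c b"
    proof (intro ballI impI)
    fix h assume h: "h \<in> H_vert" "H_edge a h"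
    have "W h \<in> out_nbhd V E v" "E t (W h)" using T1 T2 h W_in by (simp_all add: mem_out)
    hence "E (W h) u" using al by blast
    thus "Rr h b" using T4[OF h(1)] by simp
    qed
  qed
qed

lemma Rinv: assumes al: "dg_iso H_vert H_edge H_vert H_edge \<alpha>"
  shows "\<forall>a\<in>H_vert. \<forall>b\<in>H_vert. Rr (\<alpha> a) (\<alpha> b) = Rr a b"
proof -
  let ?N = "out_nbhd V E x0"
  let ?h = "inv_into ?N \<phi>0 \<circ> (\<alpha> \<circ> \<phi>0)"
  have isoh: "dg_iso ?N E ?N E ?h" by (rule dg_iso_comp[OF dg_iso_comp[OF iso0 al] dg_iso_inv[OF iso0]])
  have xN: "x0 \<notin> ?N" by (simp add: mem_out irr)
  have xa: "\<forall>y\<in>?N. E x0 y \<and> \<not> E y x0" using asym by (auto simp: mem_out)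
  have isoA: "dg_iso (insert x0 ?N) E (insert x0 ?N) E (\<lambda>y. if y = x0 then x0 else ?h y)"
    by (rule dg_iso_insert[OF isoh xN xa irr])
  have cA: "connected_on E (insert x0 ?N)" by (rule conn[of x0]) (auto simp: mem_out)
  have sub: "insert x0 ?N \<subseteq> V" using x0V by (auto simp: mem_out dest: EV)
  have fin: "finite (insert x0 ?N)" using fin_out[OF x0V] by simp
  have "\<exists>g. automorphism V E g \<and> (\<forall>x\<in>insert x0 ?N. g x = (\<lambda>y. if y = x0 then x0 else ?h y) x)"
    by (rule ext[OF sub sub fin fin cA cA isoA])
  then obtain g where g: "automorphism V E g" "\<forall>x\<in>insert x0 ?N. g x = (if x = x0 then x0 else ?h x)" by auto
  have gx: "g x0 = x0" using g(2) by simp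
  have alH: "\<And>h. h \<in> H_vert \<Longrightarrow> \<alpha> h \<in> H_vert" using al unfolding dg_iso_def by (meson bij_betw_apply)
  have gW: "g (W h) = W (\<alpha> h)" if h: "h \<in> H_vert" for h
  proof -
    have wN: "W h \<in> ?N" using W_in[OF h] by (simp add: mem_out)
    have "W h \<noteq> x0" using wN xN by auto
    hence "g (W h) = ?h (W h)" using g(2) wN by simp
    also have "\<dots> = W (\<alpha> h)" unfolding W_def[symmetric] using phiW[OF h] by (simp add: W_def)
    finally show ?thesis .
  qed
  have gs: "g (sf w) = sf (g w)" if w: "E x0 w" for w
  proof -
    have wV: "w \<in> V" "sf w \<in> V" using EV w sf2[OF w] by auto
    have gw: "E x0 (g w)" using aut_E[OF g(1) x0V wV(1)] gx w by simp
    have u1: "E (g (sf w)) x0" using aut_E[OF g(1) wV(2) x0V] gx sf2[OF w] by simp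
    have cu: "\<forall>d. E (g w) d \<and> E x0 d \<longrightarrow> E (g (sf w)) d"
    proof (intro allI impI)
      fix d assume d: "E (g w) d \<and> E x0 d"
      have dV: "d \<in> V" using EV d by blast
      obtain d' where d': "d' \<in> V" "g d' = d" using aut_surj[OF g(1) dV] by blast
      have "E w d'" using aut_E[OF g(1) wV(1) d'(1)] d d' by simp
      moreover have "E x0 d'" using aut_E[OF g(1) x0V d'(1)] d d' gx by simp
      ultimately have "E (sf w) d'" using sf3[OF w, of d'] by blast
      thus "E (g (sf w)) d" using aut_E[OF g(1) wV(2) d'(1)] d' by simp
    qed
    have cu': "\<forall>d. E (g w) d \<and> E x0 d \<longrightarrow> E (sf (g w)) d" using sf3[OF gw] by blast
    show ?thesis by (rule U[OF u1 sf2[OF gw] gw cu cu'])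
  qed
  show ?thesis
  proof (intro ballI)
    fix a b assume a: "a \<in> H_vert" and b: "b \<in> H_vert"
    have wa: "E x0 (W a)" "E x0 (W b)" using W_in a b by auto
    have V2: "W a \<in> V" "sf (W b) \<in> V" using EV wa sf2[OF wa(2)] by auto
    have "Rr (\<alpha> a) (\<alpha> b) = E (g (W a)) (sf (g (W b)))" unfolding Rr_def using gW a b by simp
    also have "\<dots> = E (g (W a)) (g (sf (W b)))" using gs[OF wa(2)] by simp
    also have "\<dots> = Rr a b" unfolding Rr_def by (rule aut_E[OF g(1) V2])
    finally show "Rr (\<alpha> a) (\<alpha> b) = Rr a b" .
  qed
qed

lemma Rex: "\<exists>b\<in>H_vert. b \<noteq> (False,0) \<and> Rr (False,0) b"
proof -
  have h0: "(False,0) \<in> H_vert" by (simp add: H_vert_def)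
  define v where "v = W (False,0)"
  have xv: "E x0 v" unfolding v_def by (rule W_in[OF h0])
  obtain u where u: "E v u" "E u x0" "u \<noteq> sf v" using pge2[OF xv] by blast
  obtain w where w: "E x0 w" "u = sf w" using char[OF u(2)] by blast
  have bH: "\<phi>0 w \<in> H_vert" by (rule phi_in[OF w(1)])
  have Ww: "W (\<phi>0 w) = w" by (rule Wphi[OF w(1)])
  have "\<phi>0 w \<noteq> (False,0)"
  proof
    assume "\<phi>0 w = (False,0)"
    hence "w = v" using Ww unfolding v_def by simp
    thus False using u(3) w(2) by simp
  qed
  moreover have "Rr (False,0) (\<phi>0 w)" unfolding Rr_def using Ww u(1) w(2) unfolding v_def by simp
  ultimately show ?thesis using bH by blast
qed

theorem contra: False
  by (rule Rcontra[OF R1 R2 R3 Rinv[OF iso_rho] Rinv[OF iso_Lj] Rex])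

end


lemma out_case:
  assumes dg: "digraph V E" and lf: "locally_finite V E" and ch: "C_homogeneous V E" and x: "x \<in> V"
  shows "\<not> dg_isomorphic (out_nbhd V E x) E H_vert H_edge"
proof
  assume "dg_isomorphic (out_nbhd V E x) E H_vert H_edge"
  then obtain \<phi> where iso: "dg_iso (out_nbhd V E x) E H_vert H_edge \<phi>" unfolding dg_isomorphic_def by blast
  interpret CH V E x \<phi> using dg lf ch x iso by unfold_locales
  show False by (rule contra)
qed

lemma rev_digraph: "digraph V E \<Longrightarrow> digraph V (\<lambda>a b. E b a)"
  unfolding digraph_def by blast

lemma rev_lf: "locally_finite V E \<Longrightarrow> locally_finite V (\<lambda>a b. E b a)"
  unfolding locally_finite_def by (simp add: disj_commute)

lemma rev_conn: "connected_on (\<lambda>a b. E b a) A = connected_on E A"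
  unfolding connected_on_def by (simp add: disj_commute)

lemma rev_iso: "dg_iso A (\<lambda>a b. E b a) B (\<lambda>a b. E b a) f = dg_iso A E B E f"
  unfolding dg_iso_def by auto

lemma rev_aut: "automorphism V (\<lambda>a b. E b a) g = automorphism V E g"
  unfolding automorphism_def by (rule rev_iso)

lemma rev_ch: assumes ch: "C_homogeneous V E" shows "C_homogeneous V (\<lambda>a b. E b a)"
  unfolding C_homogeneous_def
proof (intro allI impI)
  fix A B f
  assume h: "A \<subseteq> V \<and> B \<subseteq> V \<and> finite A \<and> finite B \<and> connected_on (\<lambda>a b. E b a) A \<and> connected_on (\<lambda>a b. E b a) B
        \<and> dg_iso A (\<lambda>a b. E b a) B (\<lambda>a b. E b a) f"
  have "connected_on E A" "connected_on E B" "dg_iso A E B E f"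
    using h rev_conn[of E A] rev_conn[of E B] rev_iso[of A E B f] by simp_all
  hence "\<exists>g. automorphism V E g \<and> (\<forall>x\<in>A. g x = f x)"
    using ch h unfolding C_homogeneous_def by blast
  thus "\<exists>g. automorphism V (\<lambda>a b. E b a) g \<and> (\<forall>x\<in>A. g x = f x)"
    using rev_aut[of V E] by simp
qed

lemma rev_out: "out_nbhd V (\<lambda>a b. E b a) x = in_nbhd V E x"
  unfolding out_nbhd_def in_nbhd_def by simp

lemma rev_H: assumes "dg_iso A E H_vert H_edge \<phi>"
  shows "dg_iso A (\<lambda>a b. E b a) H_vert H_edge (hpsi \<circ> \<phi>)"
proof -
  have "dg_iso A (\<lambda>a b. E b a) H_vert (\<lambda>a b. H_edge b a) \<phi>" using assms unfolding dg_iso_def by auto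
  thus ?thesis using dg_iso_comp iso_psi by blast
qed

theorem lemma3p1:
  fixes V :: "'a set" and E :: "'a \<Rightarrow> 'a \<Rightarrow> bool"
  assumes "digraph V E" and "connected_on E V" and "locally_finite V E" and "C_homogeneous V E"
  shows "\<forall>x\<in>V. \<not> dg_isomorphic (out_nbhd V E x) E H_vert H_edge
              \<and> \<not> dg_isomorphic (in_nbhd V E x) E H_vert H_edge"
proof
  fix x assume x: "x \<in> V"
  show "\<not> dg_isomorphic (out_nbhd V E x) E H_vert H_edge \<and> \<not> dg_isomorphic (in_nbhd V E x) E H_vert H_edge"
  proof
    show "\<not> dg_isomorphic (out_nbhd V E x) E H_vert H_edge" by (rule out_case[OF assms(1,3,4) x])
    show "\<not> dg_isomorphic (in_nbhd V E x) E H_vert H_edge"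
    proof
      assume "dg_isomorphic (in_nbhd V E x) E H_vert H_edge"
      then obtain \<phi> where "dg_iso (in_nbhd V E x) E H_vert H_edge \<phi>" unfolding dg_isomorphic_def by blast
      hence "dg_iso (out_nbhd V (\<lambda>a b. E b a) x) (\<lambda>a b. E b a) H_vert H_edge (hpsi \<circ> \<phi>)"
        unfolding rev_out by (rule rev_H)
      hence "dg_isomorphic (out_nbhd V (\<lambda>a b. E b a) x) (\<lambda>a b. E b a) H_vert H_edge"
        unfolding dg_isomorphic_def by blast
      thus False using out_case[OF rev_digraph[OF assms(1)] rev_lf[OF assms(3)] rev_ch[OF assms(4)] x] by blast
    qed
  qed
qed

end
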